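(* Fix $0<R<1$, $\varepsilon>0$ with $1-R-\varepsilon>0$, a positive integer $\ell$, and let $q$ be a prime power with $q\ge \max\left(\ell^{\frac{8R}{\varepsilon}+6},\ \ell\cdot 2^{4/\varepsilon}\right)$. Let $L:=2\ell/\varepsilon$ and let $\mathcal{C}\subseteq \mathbb{F}_q^n$ be a random linear code of rate $R$. Then with probability at least $1-q^{-\varepsilon n L/8}$, for every choice of input lists $S_1,\dots,S_n\subseteq\mathbb{F}_q$ each of size $\ell$, every linearly independent subset of $\mathcal{C}\cap B(1-R-\varepsilon, S_1\times\cdots\times S_n)$ has size less than $2\ell/\varepsilon$.
   Context: A random linear code of rate $R$ in $\mathbb{F}_q^n$ is the column span of a generator matrix $\mathbf{G}\in\mathbb{F}_q^{n\times Rn}$ whose entries are independent and uniformly random elements of $\mathbb{F}_q$ (here $Rn$ is an integer). For sets $S_1,\dots,S_n\subseteq\mathbb{F}_q$ of size $\ell$ and $\rho\in(0,1)$, the $\rho$-radius $\ell$-list-recovery ball $B(\rho,S_1\times\cdots\times S_n)$ is the set of $x\in\mathbb{F}_q^n$ such that $|\{i\in[n]: x[i]\in S_i\}|\ge(1-\rho)n$. *)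

theory Defs
  imports "HOL-Analysis.Analysis"
begin

definition code_of :: "'a::field ^ 'k ^ 'n \<Rightarrow> ('a ^ 'n) set" where
  "code_of G = vec.span {column j G | j. True}"

definition lr_ball :: "real \<Rightarrow> ('n::finite \<Rightarrow> 'a set) \<Rightarrow> ('a ^ 'n) set" where
  "lr_ball \<rho> S = {x. real (card {i. x $ i \<in> S i}) \<ge> (1 - \<rho>) * real CARD('n)}"

definition prob_gen :: "('a::finite ^ 'k::finite ^ 'n::finite \<Rightarrow> bool) \<Rightarrow> real" where
  "prob_gen P = real (card {G. P G}) / real (card (UNIV :: ('a ^ 'k ^ 'n) set))"

end

theory Submission
  imports Defs
begin


lemma column_eq_mult: "column j (G::'a::field^'k^'n) = G *v axis j 1"
  by (simp add: vec_eq_iff column_def matrix_vector_mult_def axis_def if_distrib cong: if_cong)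

lemma code_of_subset: "code_of (G::'a::field^'k^'n) \<subseteq> range ((*v) G)"
  unfolding code_of_def
proof (rule vec.span_minimal)
  show "{column j G |j. True} \<subseteq> range ((*v) G)" by (auto simp: column_eq_mult)
  show "vec.subspace (range ((*v) G))"
    by (rule vec.subspace_image[OF vec.subspace_UNIV])
qed



lemma indep_preimage:
  fixes G :: "'a::field^'k^'n"
  assumes ind: "vec.independent ((*v) G ` S)" and inj: "inj_on ((*v) G) S"
  shows "vec.independent S"
proof
  assume "vec.dependent S"
  then obtain t u v where t: "finite t" "t \<subseteq> S" "(\<Sum>v\<in>t. u v *s v) = 0" and v: "v \<in> t" "u v \<noteq> 0"
    unfolding vec.dependent_explicit by blast
  have injt: "inj_on ((*v) G) t" using inj t(2) by (rule inj_on_subset)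
  define w where "w x = u (the_inv_into t ((*v) G) x)" for x
  have lin: "Vector_Spaces.linear (*s) (*s) ((*v) G)" by (rule matrix_vector_mul_linear_gen)
  have "(\<Sum>x\<in>(*v) G ` t. w x *s x) = (\<Sum>y\<in>t. w (G *v y) *s (G *v y))"
    by (rule sum.reindex[OF injt, unfolded comp_def])
  also have "\<dots> = (\<Sum>y\<in>t. u y *s (G *v y))"
    by (rule sum.cong) (simp_all add: w_def the_inv_into_f_f[OF injt])
  also have "\<dots> = G *v (\<Sum>y\<in>t. u y *s y)"
    by (simp only: vec.linear_sum[OF lin] vec.linear_scale[OF lin] comp_def)
  also have "\<dots> = 0" by (simp only: t(3) matrix_vector_mult_0_right)
  finally have z: "(\<Sum>x\<in>(*v) G ` t. w x *s x) = 0" .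
  have wv: "w (G *v v) \<noteq> 0" using v by (simp add: w_def the_inv_into_f_f[OF injt])
  have "vec.dependent ((*v) G ` S)"
    unfolding vec.dependent_explicit
    apply (rule exI[of _ "(*v) G ` t"], rule exI[of _ w])
    using z wv t v by blast
  with ind show False by simp
qed


lemma fiber_bound:
  fixes Y :: "'a::{finite,field}^'n::finite \<Rightarrow> 'a^'k::finite" and A :: "('a^'n) set"
  assumes fin: "finite A" and inj: "inj_on Y A" and ind: "vec.independent (Y ` A)"
  shows "card {G::'a^'k^'n. \<forall>a\<in>A. G *v Y a = t a} * CARD('a^'n) ^ card A \<le> CARD('a^'k^'n)"
proof -
  have surj: "\<exists>G::'a^'k^'n. \<forall>a\<in>A. G *v Y a = u a" for u
  proof -
    obtain g :: "'a^'k \<Rightarrow> 'a^'n" where g: "Vector_Spaces.linear (*s) (*s) g"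
      "\<forall>x\<in>Y ` A. g x = u (the_inv_into A Y x)"
      using vec.linear_independent_extend[OF ind, where f="\<lambda>x. u (the_inv_into A Y x)"] by blast
    show ?thesis
      by (rule exI[of _ "matrix g"]) (simp add: matrix_works[OF g(1)] g(2) the_inv_into_f_f[OF inj])
  qed
  define s where "s u = (SOME G::'a^'k^'n. \<forall>a\<in>A. G *v Y a = u a)" for u
  have s: "\<forall>a\<in>A. s u *v Y a = u a" for u
    unfolding s_def using someI_ex[OF surj] by blast
  define \<phi> where "\<phi> G = restrict (\<lambda>a. G *v Y a) A" for G :: "'a^'k^'n"
  define F0 where "F0 = {G::'a^'k^'n. \<forall>a\<in>A. G *v Y a = 0}"
  define P where "P = (PiE A (\<lambda>_. UNIV :: ('a^'n) set))"
  have bij: "bij_betw (\<lambda>G. (G - s (\<phi> G), \<phi> G)) UNIV (F0 \<times> P)"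
  proof (rule bij_betwI[where g="\<lambda>(K,u). K + s u"])
    show "(\<lambda>G. (G - s (\<phi> G), \<phi> G)) \<in> UNIV \<rightarrow> F0 \<times> P"
      using s by (auto simp: F0_def P_def \<phi>_def matrix_vector_mult_diff_rdistrib)
    show "(\<lambda>(K, u). K + s u) \<in> F0 \<times> P \<rightarrow> UNIV" by simp
    show "(case (G - s (\<phi> G), \<phi> G) of (K, u) \<Rightarrow> K + s u) = G" for G by simp
    show "(\<lambda>G. (G - s (\<phi> G), \<phi> G)) (case y of (K, u) \<Rightarrow> K + s u) = y" if yin: "y \<in> F0 \<times> P" for y
    proof -
      obtain K u where y: "y = (K, u)" "K \<in> F0" "u \<in> P" using yin by (cases y) auto
      have "\<phi> (K + s u) = u"
        using y s unfolding \<phi>_def F0_def P_def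
        by (auto simp: matrix_vector_mult_add_rdistrib PiE_def extensional_def fun_eq_iff)
      then show ?thesis using y by simp
    qed
  qed
  have cardP: "card P = CARD('a^'n) ^ card A"
    unfolding P_def using fin by (simp add: card_PiE)
  have main: "card F0 * card P = CARD('a^'k^'n)"
    using bij_betw_same_card[OF bij] by (simp add: card_cartesian_product)
  have le: "card {G::'a^'k^'n. \<forall>a\<in>A. G *v Y a = t a} \<le> card F0"
  proof (cases "{G::'a^'k^'n. \<forall>a\<in>A. G *v Y a = t a} = {}")
    case True then show ?thesis by (simp only: card.empty)
  next
    case False
    then obtain G1 where G1: "\<forall>a\<in>A. G1 *v Y a = t a" by auto
    show ?thesis
    proof (rule card_inj_on_le[where f="\<lambda>G. G - G1"])
      show "inj_on (\<lambda>G. G - G1) {G. \<forall>a\<in>A. G *v Y a = t a}" by (auto simp: inj_on_def)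
      show "(\<lambda>G. G - G1) ` {G. \<forall>a\<in>A. G *v Y a = t a} \<subseteq> F0"
        using G1 by (auto simp: F0_def matrix_vector_mult_diff_rdistrib)
    qed simp
  qed
  have "card {G::'a^'k^'n. \<forall>a\<in>A. G *v Y a = t a} * card P \<le> card F0 * card P"
    using le by (rule mult_le_mono1)
  then have "card {G::'a^'k^'n. \<forall>a\<in>A. G *v Y a = t a} * card P \<le> CARD('a^'k^'n)"
    by (simp only: main)
  then show ?thesis by (simp only: cardP)
qed

lemma code_count:
  fixes A :: "('a::{finite,field}^'n::finite) set"
  assumes fin: "finite A" and ind: "vec.independent A"
  shows "real (card {G::'a^'k::finite^'n. A \<subseteq> code_of G})
         \<le> real (CARD('a^'k) ^ card A) * (real CARD('a^'k^'n) / real (CARD('a^'n) ^ card A))"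
proof -
  define P where "P = (PiE A (\<lambda>_. UNIV :: ('a^'k) set))"
  define F where "F Y = {G::'a^'k^'n. \<forall>a\<in>A. G *v Y a = a}" for Y
  have sub: "{G::'a^'k^'n. A \<subseteq> code_of G} \<subseteq> (\<Union>Y\<in>P. F Y)"
  proof
    fix G :: "'a^'k^'n" assume "G \<in> {G. A \<subseteq> code_of G}"
    then have "\<forall>a\<in>A. \<exists>y. G *v y = a" using code_of_subset[of G] by blast
    then obtain Y where Y: "\<forall>a\<in>A. G *v Y a = a" by metis
    have "restrict Y A \<in> P" by (simp add: P_def)
    moreover have "G \<in> F (restrict Y A)" using Y by (simp add: F_def)
    ultimately show "G \<in> (\<Union>Y\<in>P. F Y)" by blast
  qed
  have each: "real (card (F Y)) \<le> real CARD('a^'k^'n) / real (CARD('a^'n) ^ card A)" for Y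
  proof (cases "F Y = {}")
    case True then show ?thesis by (simp only: card.empty) simp
  next
    case False
    then obtain G where G: "\<forall>a\<in>A. G *v Y a = a" by (auto simp: F_def)
    have inj: "inj_on Y A" using G by (metis inj_onI)
    have injG: "inj_on ((*v) G) (Y ` A)" using G by (auto simp: inj_on_def)
    have img: "(*v) G ` (Y ` A) = A" using G by force
    have "vec.independent (Y ` A)" using indep_preimage[of G "Y ` A"] img injG ind by simp
    from fiber_bound[OF fin inj this, of "\<lambda>a. a"]
    have "card (F Y) * CARD('a^'n) ^ card A \<le> CARD('a^'k^'n)" by (simp add: F_def)
    then have "real (card (F Y)) * real (CARD('a^'n) ^ card A) \<le> real CARD('a^'k^'n)"
      by (metis of_nat_le_iff of_nat_mult)
    moreover have "real (CARD('a^'n) ^ card A) > 0" by simp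
    ultimately show ?thesis by (simp add: pos_le_divide_eq)
  qed
  have "real (card {G::'a^'k^'n. A \<subseteq> code_of G}) \<le> real (card (\<Union>Y\<in>P. F Y))"
    using sub by (simp add: card_mono)
  also have "\<dots> \<le> real (\<Sum>Y\<in>P. card (F Y))"
    using card_UN_le[of P F] fin by (simp add: P_def finite_PiE del: of_nat_sum)
  also have "\<dots> = (\<Sum>Y\<in>P. real (card (F Y)))" by simp
  also have "\<dots> \<le> (\<Sum>Y\<in>P. real CARD('a^'k^'n) / real (CARD('a^'n) ^ card A))"
    by (rule sum_mono) (rule each)
  also have "\<dots> = real (card P) * (real CARD('a^'k^'n) / real (CARD('a^'n) ^ card A))" by simp
  also have "card P = CARD('a^'k) ^ card A" unfolding P_def using fin by (simp add: card_PiE)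
  finally show ?thesis .
qed



lemma box_card:
  fixes S :: "'n::finite \<Rightarrow> 'a::finite set" and T :: "'n set"
  assumes l: "\<forall>i. card (S i) = l"
  shows "card {x::'a^'n. \<forall>i\<in>T. x $ i \<in> S i} = l ^ card T * CARD('a) ^ (CARD('n) - card T)"
proof -
  define C where "C i = (if i \<in> T then S i else UNIV)" for i
  have "bij_betw vec_nth {x::'a^'n. \<forall>i\<in>T. x $ i \<in> S i} (PiE UNIV C)"
  proof (rule bij_betwI[where g=vec_lambda])
    show "vec_nth \<in> {x::'a^'n. \<forall>i\<in>T. x $ i \<in> S i} \<rightarrow> PiE UNIV C"
      by (auto simp: PiE_UNIV_domain C_def)
    show "vec_lambda \<in> PiE UNIV C \<rightarrow> {x::'a^'n. \<forall>i\<in>T. x $ i \<in> S i}"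
      by (auto simp: PiE_UNIV_domain C_def Pi_def)
  qed auto
  then have "card {x::'a^'n. \<forall>i\<in>T. x $ i \<in> S i} = (\<Prod>i\<in>UNIV. card (C i))"
    by (simp add: bij_betw_same_card card_PiE)
  also have "\<dots> = (\<Prod>i\<in>UNIV. if i \<in> T then l else CARD('a))"
    by (rule prod.cong) (auto simp: C_def l)
  also have "\<dots> = l ^ card T * CARD('a) ^ (CARD('n) - card T)"
  proof -
    have "card (UNIV - T) = CARD('n) - card T" by (simp add: card_Diff_subset)
    then show ?thesis by (simp add: prod.If_cases Compl_eq_Diff_UNIV)
  qed
  finally show ?thesis .
qed

lemma ball_card:
  fixes S :: "'n::finite \<Rightarrow> 'a::finite set" and \<rho> :: real
  assumes l: "\<forall>i. card (S i) = l" and lpos: "l > 0"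
  shows "real (card (lr_ball \<rho> S)) \<le> 2 ^ CARD('n) * (real CARD('a) ^ CARD('n) * (real l / real CARD('a)) powr ((1 - \<rho>) * real CARD('n)))"
proof -
  let ?n = "CARD('n)" and ?q = "real CARD('a)"
  define Ts where "Ts = {T::'n set. (1 - \<rho>) * real ?n \<le> real (card T)}"
  define B where "B T = {x::'a^'n. \<forall>i\<in>T. x $ i \<in> S i}" for T
  have sub: "lr_ball \<rho> S \<subseteq> (\<Union>T\<in>Ts. B T)"
    unfolding lr_ball_def Ts_def B_def by (auto intro!: bexI[of _ "{i. _ $ i \<in> S i}"])
  have lq: "l \<le> CARD('a)" using l by (metis card_mono finite subset_UNIV)
  have qpos: "?q > 0" by simp
  have each: "real (card (B T)) \<le> ?q ^ ?n * (real l / ?q) powr ((1 - \<rho>) * real ?n)" if "T \<in> Ts" for T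
  proof -
    have cT: "card T \<le> ?n" by (simp add: card_mono)
    have "real (card (B T)) = real l ^ card T * ?q ^ (?n - card T)"
      unfolding B_def box_card[OF l] by simp
    also have "\<dots> = ?q ^ ?n * (real l / ?q) ^ card T"
      using cT qpos by (simp add: power_divide power_diff field_simps)
    also have "(real l / ?q) ^ card T = (real l / ?q) powr real (card T)"
      using lpos qpos by (simp add: powr_realpow)
    also have "\<dots> \<le> (real l / ?q) powr ((1 - \<rho>) * real ?n)"
      using that lq lpos qpos by (intro powr_mono') (auto simp: Ts_def)
    finally show ?thesis by (simp add: mult_left_mono)
  qed
  have "real (card (lr_ball \<rho> S)) \<le> real (card (\<Union>T\<in>Ts. B T))"
    using sub by (simp add: card_mono)
  also have "\<dots> \<le> (\<Sum>T\<in>Ts. real (card (B T)))"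
    using card_UN_le[of Ts B] by (simp del: of_nat_sum add: of_nat_sum[symmetric])
  also have "\<dots> \<le> (\<Sum>T\<in>Ts. ?q ^ ?n * (real l / ?q) powr ((1 - \<rho>) * real ?n))"
    by (rule sum_mono) (rule each)
  also have "\<dots> = real (card Ts) * (?q ^ ?n * (real l / ?q) powr ((1 - \<rho>) * real ?n))" by simp
  also have "\<dots> \<le> 2 ^ ?n * (?q ^ ?n * (real l / ?q) powr ((1 - \<rho>) * real ?n))"
  proof (rule mult_right_mono)
    have "card Ts \<le> card (Pow (UNIV::'n set))" by (rule card_mono) auto
    then show "real (card Ts) \<le> 2 ^ ?n" by (simp add: card_Pow)
  qed simp
  finally show ?thesis .
qed



lemma keyK:
  fixes q l R \<epsilon> :: real
  assumes q: "q \<ge> max (l powr (8 * R / \<epsilon> + 6)) (l * 2 powr (4 / \<epsilon>))" and l: "l \<ge> 1" and e: "\<epsilon> > 0"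
  shows "2 * l powr (R + \<epsilon>) \<le> q powr (3 * \<epsilon> / 8)"
proof -
  have q1: "q \<ge> l * 2 powr (4 / \<epsilon>)" and q2: "q \<ge> l powr (8 * R / \<epsilon> + 6)" using q by auto
  have lp: "l > 0" using l by simp
  have "q powr (\<epsilon>/4) \<ge> (l * 2 powr (4 / \<epsilon>)) powr (\<epsilon>/4)"
    using q1 lp e by (intro powr_mono2) auto
  also have "(l * 2 powr (4 / \<epsilon>)) powr (\<epsilon>/4) = l powr (\<epsilon>/4) * 2"
    using lp e by (simp add: powr_mult powr_powr)
  finally have A: "l powr (\<epsilon>/4) * 2 \<le> q powr (\<epsilon>/4)" .
  have "q powr (\<epsilon>/8) \<ge> (l powr (8 * R / \<epsilon> + 6)) powr (\<epsilon>/8)"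
    using q2 lp e by (intro powr_mono2) auto
  also have "(l powr (8 * R / \<epsilon> + 6)) powr (\<epsilon>/8) = l powr (R + 3 * \<epsilon> / 4)"
  proof -
    have "(8 * R / \<epsilon> + 6) * (\<epsilon>/8) = R + 3 * \<epsilon> / 4" using e by (simp add: field_simps)
    then show ?thesis by (simp only: powr_powr)
  qed
  finally have B: "l powr (R + 3 * \<epsilon> / 4) \<le> q powr (\<epsilon>/8)" .
  have "2 * l powr (R + \<epsilon>) = (l powr (\<epsilon>/4) * 2) * l powr (R + 3 * \<epsilon> / 4)"
    by (simp add: powr_add[symmetric] add.commute)
  also have "\<dots> \<le> q powr (\<epsilon>/4) * q powr (\<epsilon>/8)"
    using A B by (intro mult_mono) auto
  also have "\<dots> = q powr (3 * \<epsilon> / 8)" by (simp add: powr_add[symmetric])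
  finally show ?thesis .
qed

lemma arith_main:
  fixes q l R \<epsilon> :: real and n m k ln :: nat
  assumes q: "q > 1" and l: "l \<ge> 1" and e: "\<epsilon> > 0"
    and K: "2 * l powr (R + \<epsilon>) \<le> q powr (3 * \<epsilon> / 8)"
    and k: "real k = R * real n" and m: "2 * l / \<epsilon> \<le> real m" and ln: "real ln = l * real n"
  shows "q ^ ln * (2 ^ n * (q ^ n * (l / q) powr ((R + \<epsilon>) * real n))) ^ m * q ^ (k * m) / q ^ (n * m)
         \<le> q powr (- (\<epsilon> * real n * (2 * l / \<epsilon>) / 8))"
proof -
  have qp: "q > 0" using q by simp
  have lp: "l > 0" using l by simp
  define b where "b = 2 ^ n * (q ^ n * (l / q) powr ((R + \<epsilon>) * real n))"
  have "b = (2 * l powr (R + \<epsilon>)) powr real n * q powr ((1 - R - \<epsilon>) * real n)"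
    unfolding b_def using qp lp
    by (simp add: powr_divide powr_realpow[symmetric] powr_mult powr_powr powr_diff algebra_simps)
  also have "\<dots> \<le> (q powr (3 * \<epsilon> / 8)) powr real n * q powr ((1 - R - \<epsilon>) * real n)"
    using K lp by (intro mult_right_mono powr_mono2) auto
  also have "\<dots> = q powr ((1 - R - 5 * \<epsilon> / 8) * real n)"
    by (simp add: powr_powr powr_add[symmetric] algebra_simps)
  finally have bb: "b \<le> q powr ((1 - R - 5 * \<epsilon> / 8) * real n)" .
  have b0: "b \<ge> 0" unfolding b_def using qp by simp
  have "b ^ m \<le> (q powr ((1 - R - 5 * \<epsilon> / 8) * real n)) ^ m"
    using bb b0 by (intro power_mono) auto
  also have "\<dots> = q powr ((1 - R - 5 * \<epsilon> / 8) * real n * real m)"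
    using qp by (simp add: powr_realpow[symmetric] powr_powr)
  finally have bm: "b ^ m \<le> q powr ((1 - R - 5 * \<epsilon> / 8) * real n * real m)" .
  have "q ^ ln * b ^ m * q ^ (k * m) / q ^ (n * m)
      = b ^ m * (q powr (real ln) * q powr (real k * real m) / q powr (real n * real m))"
    using qp by (simp add: powr_realpow[symmetric] of_nat_mult[symmetric] del: of_nat_mult)
  also have "\<dots> \<le> q powr ((1 - R - 5 * \<epsilon> / 8) * real n * real m) * (q powr (real ln) * q powr (real k * real m) / q powr (real n * real m))"
    using bm qp by (intro mult_right_mono) auto
  also have "\<dots> = q powr (l * real n - 5 * \<epsilon> / 8 * real n * real m)"
    using k ln by (simp add: powr_add[symmetric] powr_diff[symmetric] algebra_simps)
  also have "\<dots> \<le> q powr (- (\<epsilon> * real n * (2 * l / \<epsilon>) / 8))"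
  proof (intro powr_mono)
    have "2 * l \<le> \<epsilon> * real m" using m e by (simp add: field_simps)
    then have "real n * (2 * l) \<le> real n * (\<epsilon> * real m)" by (intro mult_left_mono) auto
    then show "l * real n - 5 * \<epsilon> / 8 * real n * real m \<le> - (\<epsilon> * real n * (2 * l / \<epsilon>) / 8)"
      using e by (simp add: field_simps)
  qed (use q in auto)
  finally show ?thesis unfolding b_def .
qed

theorem lemma3p3:
  fixes R \<epsilon> :: real and l :: nat
  assumes "0 < R" "R < 1" "\<epsilon> > 0" "1 - R - \<epsilon> > 0" "l > 0"
    and "real CARD('k::finite) = R * real CARD('n::finite)"
    and "real CARD('a::{finite,field}) \<ge> max (real l powr (8 * R / \<epsilon> + 6)) (real l * 2 powr (4 / \<epsilon>))"
  shows "prob_gen (\<lambda>G :: 'a ^ 'k ^ 'n.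
            \<forall>S :: 'n \<Rightarrow> 'a set. (\<forall>i. card (S i) = l) \<longrightarrow>
              (\<forall>A. A \<subseteq> code_of G \<inter> lr_ball (1 - R - \<epsilon>) S \<and> vec.independent A
                   \<longrightarrow> real (card A) < 2 * real l / \<epsilon>))
         \<ge> 1 - real CARD('a) powr (- (\<epsilon> * real CARD('n) * (2 * real l / \<epsilon>) / 8))"
proof -
  note e = assms(3) and lpos = assms(5) and kR = assms(6) and qbig = assms(7)
  define \<rho> where "\<rho> = 1 - R - \<epsilon>"
  define Pg where "Pg = (\<lambda>G :: 'a ^ 'k ^ 'n.
            \<forall>S :: 'n \<Rightarrow> 'a set. (\<forall>i. card (S i) = l) \<longrightarrow>
              (\<forall>A. A \<subseteq> code_of G \<inter> lr_ball (1 - R - \<epsilon>) S \<and> vec.independent A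
                   \<longrightarrow> real (card A) < 2 * real l / \<epsilon>))"
  define m where "m = nat \<lceil>2 * real l / \<epsilon>\<rceil>"
  define q where "q = real CARD('a)"
  define n where "n = CARD('n)"
  define k where "k = CARD('k)"
  define N where "N = real CARD('a^'k^'n)"
  define Sset where "Sset = {S :: 'n \<Rightarrow> 'a set. \<forall>i. card (S i) = l}"
  define Aset where "Aset (S :: 'n \<Rightarrow> 'a set) = {A :: ('a^'n) set. A \<subseteq> lr_ball \<rho> S \<and> card A = m \<and> vec.independent A}" for S
  define C where "C = real (CARD('a^'k) ^ m) * (N / real (CARD('a^'n) ^ m))"
  define b where "b = 2 ^ n * (q ^ n * (real l / q) powr ((R + \<epsilon>) * real n))"
  define Bad where "Bad = {G. \<not> Pg G}"
  have q1: "q > 1"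
  proof -
    have "card {0::'a, 1} \<le> CARD('a)" by (rule card_mono) auto
    then have "CARD('a) \<ge> 2" by simp
    then show ?thesis unfolding q_def by simp
  qed
  have l1: "real l \<ge> 1" using lpos by simp
  have sub: "Bad \<subseteq> (\<Union>S\<in>Sset. \<Union>A\<in>Aset S. {G::'a^'k^'n. A \<subseteq> code_of G})"
  proof
    fix G assume "G \<in> Bad"
    then obtain S A where S: "\<forall>i. card (S i) = l" and A: "A \<subseteq> code_of G \<inter> lr_ball (1 - R - \<epsilon>) S"
      "vec.independent A" "\<not> real (card A) < 2 * real l / \<epsilon>"
      unfolding Bad_def Pg_def by blast
    have "m \<le> card A" using A(3) unfolding m_def by simp
    then obtain T where T: "T \<subseteq> A" "card T = m" using obtain_subset_with_card_n by metis
    have "T \<in> Aset S" using T A vec.independent_mono[OF A(2) T(1)]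
      unfolding Aset_def \<rho>_def by blast
    moreover have "G \<in> {G. T \<subseteq> code_of G}" using T A by blast
    ultimately show "G \<in> (\<Union>S\<in>Sset. \<Union>A\<in>Aset S. {G::'a^'k^'n. A \<subseteq> code_of G})"
      using S unfolding Sset_def by blast
  qed
  have cA: "real (card {G::'a^'k^'n. A \<subseteq> code_of G}) \<le> C" if "A \<in> Aset S" for A S
  proof -
    have "finite A" by simp
    moreover have "vec.independent A" "card A = m" using that by (auto simp: Aset_def)
    ultimately show ?thesis using code_count[of A] unfolding C_def N_def by simp
  qed
  have cAset: "real (card (Aset S)) \<le> b ^ m" if "S \<in> Sset" for S
  proof -
    have Sl: "\<forall>i. card (S i) = l" using that by (simp add: Sset_def)
    have "card (Aset S) \<le> card {A. A \<subseteq> lr_ball \<rho> S \<and> card A = m}"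
      by (rule card_mono) (auto simp: Aset_def)
    also have "\<dots> = card (lr_ball \<rho> S) choose m" by (simp add: n_subsets)
    also have "\<dots> \<le> card (lr_ball \<rho> S) ^ m"
      by (cases "m \<le> card (lr_ball \<rho> S)") (auto simp: binomial_le_pow binomial_eq_0)
    finally have "real (card (Aset S)) \<le> real (card (lr_ball \<rho> S)) ^ m"
      by (metis of_nat_le_iff of_nat_power)
    also have "\<dots> \<le> b ^ m"
    proof (rule power_mono)
      have "1 - \<rho> = R + \<epsilon>" by (simp add: \<rho>_def)
      then show "real (card (lr_ball \<rho> S)) \<le> b"
        using ball_card[OF Sl lpos, of \<rho>] unfolding b_def q_def n_def by simp
    qed simp
    finally show ?thesis .
  qed
  have cS: "real (card Sset) \<le> q ^ (l * n)"
  proof -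
    have "Sset = PiE UNIV (\<lambda>_. {T. T \<subseteq> (UNIV::'a set) \<and> card T = l})"
      by (auto simp: Sset_def PiE_UNIV_domain)
    moreover have "card {T. T \<subseteq> (UNIV::'a set) \<and> card T = l} = CARD('a) choose l"
      by (rule n_subsets) simp
    ultimately have "card Sset = (CARD('a) choose l) ^ n"
      by (simp add: card_PiE n_def)
    also have "\<dots> \<le> (CARD('a) ^ l) ^ n"
    proof (rule power_mono)
      show "CARD('a) choose l \<le> CARD('a) ^ l"
        by (cases "l \<le> CARD('a)") (auto simp: binomial_le_pow binomial_eq_0)
    qed simp
    finally show ?thesis unfolding q_def
      by (metis of_nat_le_iff of_nat_power power_mult)
  qed
  have C0: "C \<ge> 0" unfolding C_def N_def by simp
  have b0: "b \<ge> 0" unfolding b_def q_def by simp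
  have "real (card Bad) \<le> real (card (\<Union>S\<in>Sset. \<Union>A\<in>Aset S. {G::'a^'k^'n. A \<subseteq> code_of G}))"
    using sub by (simp add: card_mono)
  also have "\<dots> \<le> (\<Sum>S\<in>Sset. real (card (\<Union>A\<in>Aset S. {G::'a^'k^'n. A \<subseteq> code_of G})))"
    using card_UN_le[of Sset "\<lambda>S. \<Union>A\<in>Aset S. {G::'a^'k^'n. A \<subseteq> code_of G}"]
    by (simp del: of_nat_sum add: of_nat_sum[symmetric])
  also have "\<dots> \<le> (\<Sum>S\<in>Sset. b ^ m * C)"
  proof (rule sum_mono)
    fix S assume S: "S \<in> Sset"
    have "real (card (\<Union>A\<in>Aset S. {G::'a^'k^'n. A \<subseteq> code_of G}))
        \<le> (\<Sum>A\<in>Aset S. real (card {G::'a^'k^'n. A \<subseteq> code_of G}))"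
      using card_UN_le[of "Aset S" "\<lambda>A. {G::'a^'k^'n. A \<subseteq> code_of G}"]
      by (simp del: of_nat_sum add: of_nat_sum[symmetric])
    also have "\<dots> \<le> (\<Sum>A\<in>Aset S. C)" by (rule sum_mono) (rule cA)
    also have "\<dots> = real (card (Aset S)) * C" by simp
    also have "\<dots> \<le> b ^ m * C" using cAset[OF S] C0 by (rule mult_right_mono)
    finally show "real (card (\<Union>A\<in>Aset S. {G::'a^'k^'n. A \<subseteq> code_of G})) \<le> b ^ m * C" .
  qed
  also have "\<dots> = real (card Sset) * (b ^ m * C)" by simp
  also have "\<dots> \<le> q ^ (l * n) * (b ^ m * C)"
    using cS b0 C0 by (intro mult_right_mono) auto
  finally have cBad: "real (card Bad) \<le> q ^ (l * n) * (b ^ m * C)" .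
  have Npos: "N > 0" unfolding N_def by simp
  have CN: "C = N * (q ^ (k * m) / q ^ (n * m))"
    unfolding C_def q_def k_def n_def by (simp add: power_mult)
  have ratio: "real (card Bad) / N \<le> q ^ (l * n) * b ^ m * q ^ (k * m) / q ^ (n * m)"
    using cBad Npos unfolding CN by (simp add: pos_divide_le_eq field_simps)
  have K: "2 * real l powr (R + \<epsilon>) \<le> q powr (3 * \<epsilon> / 8)"
    by (rule keyK) (use qbig l1 e in \<open>auto simp: q_def\<close>)
  have mm: "2 * real l / \<epsilon> \<le> real m" unfolding m_def by linarith
  have ar: "q ^ (l * n) * b ^ m * q ^ (k * m) / q ^ (n * m)
      \<le> q powr (- (\<epsilon> * real n * (2 * real l / \<epsilon>) / 8))"
    using arith_main[OF q1 l1 e K _ mm, where k=k and n=n and ln="l * n"] kR unfolding k_def n_def b_def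
    by simp
  have split: "card {G. Pg G} = CARD('a^'k^'n) - card Bad"
  proof -
    have "{G. Pg G} = UNIV - Bad" unfolding Bad_def by auto
    then show ?thesis by (simp add: card_Diff_subset)
  qed
  have "card Bad \<le> CARD('a^'k^'n)" by (rule card_mono) auto
  then have "prob_gen Pg = 1 - real (card Bad) / N"
    using Npos unfolding prob_gen_def split N_def by (simp add: field_simps of_nat_diff)
  then have "prob_gen Pg \<ge> 1 - q powr (- (\<epsilon> * real n * (2 * real l / \<epsilon>) / 8))"
    using ratio ar by linarith
  then show ?thesis unfolding Pg_def q_def n_def .
qed

end
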